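(* For every positive integer $n$ there is a permutation of length $16n\log_2 n+\Theta(n)$ that contains every skew riffle permutation of length $n$ as a pattern.
   Context: A permutation $\pi$ of length $k$ is a pattern of $\sigma$ if there are indices $\ell_1<\cdots<\ell_k$ with $\pi_i<\pi_j$ iff $\sigma_{\ell_i}<\sigma_{\ell_j}$. Riffle shuffle permutations are the permutations avoiding $321$, $2143$ and $2413$; antiriffle permutations are the inverses of riffle shuffle permutations. For permutations $\sigma,\tau$, the operation $\sigma\ominus\tau$ (called skew sum in the paper) is the permutation of length $|\sigma|+|\tau|$ with $(\sigma\ominus\tau)_i=\sigma_i$ for $1\le i\le|\sigma|$ and $(\sigma\ominus\tau)_i=\tau_{i-|\sigma|}+|\sigma|$ for $|\sigma|<i\le|\sigma|+|\tau|$. The skew riffle permutations form the smallest set of permutations containing all riffle and antiriffle permutations and closed under this operation. *)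

theory Defs
  imports Complex_Main "HOL-Library.Landau_Symbols"
begin

text \<open>Permutations of length n are represented 0-based as lists that are
  arrangements of 0,...,n-1.\<close>

definition is_perm :: "nat list \<Rightarrow> bool" where
  "is_perm xs \<longleftrightarrow> distinct xs \<and> set xs = {0..<length xs}"

definition contains :: "nat list \<Rightarrow> nat list \<Rightarrow> bool" where
  "contains \<sigma> \<pi> \<longleftrightarrow>
     (\<exists>l :: nat \<Rightarrow> nat. strict_mono_on {0..<length \<pi>} l
        \<and> (\<forall>i<length \<pi>. l i < length \<sigma>)
        \<and> (\<forall>i<length \<pi>. \<forall>j<length \<pi>. \<pi> ! i < \<pi> ! j \<longleftrightarrow> \<sigma> ! (l i) < \<sigma> ! (l j)))"

definition avoids :: "nat list \<Rightarrow> nat list \<Rightarrow> bool" where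
  "avoids \<sigma> \<pi> \<longleftrightarrow> \<not> contains \<sigma> \<pi>"

text \<open>Riffle shuffle permutations: avoid 321, 2143, 2413 (written 0-based).\<close>
definition riffle :: "nat list \<Rightarrow> bool" where
  "riffle \<sigma> \<longleftrightarrow> is_perm \<sigma> \<and> avoids \<sigma> [2,1,0] \<and> avoids \<sigma> [1,0,3,2] \<and> avoids \<sigma> [1,3,0,2]"

definition antiriffle :: "nat list \<Rightarrow> bool" where
  "antiriffle \<sigma> \<longleftrightarrow> is_perm \<sigma> \<and>
     (\<exists>\<rho>. riffle \<rho> \<and> length \<rho> = length \<sigma> \<and> (\<forall>i<length \<sigma>. \<rho> ! (\<sigma> ! i) = i))"

text \<open>The paper's operation (called skew sum there).\<close>
definition skew_sum :: "nat list \<Rightarrow> nat list \<Rightarrow> nat list" where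
  "skew_sum \<sigma> \<tau> = \<sigma> @ map (\<lambda>x. x + length \<sigma>) \<tau>"

inductive skew_riffle :: "nat list \<Rightarrow> bool" where
  riffle_sr: "riffle \<sigma> \<Longrightarrow> skew_riffle \<sigma>"
| antiriffle_sr: "antiriffle \<sigma> \<Longrightarrow> skew_riffle \<sigma>"
| sum_sr: "skew_riffle \<sigma> \<Longrightarrow> skew_riffle \<tau> \<Longrightarrow> skew_riffle (skew_sum \<sigma> \<tau>)"

end

theory Submission
  imports Defs
begin

lemma is_permI: "set xs = {0..<length xs} \<Longrightarrow> is_perm xs"
  unfolding is_perm_def by (metis atLeastLessThan_empty_iff card_atLeastLessThan card_distinct diff_zero)

lemma is_perm_bound: "is_perm xs \<Longrightarrow> i < length xs \<Longrightarrow> xs ! i < length xs"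
  unfolding is_perm_def by (metis atLeastLessThan_iff nth_mem)

lemma is_perm_nth_eq: "is_perm xs \<Longrightarrow> i < length xs \<Longrightarrow> j < length xs \<Longrightarrow> xs ! i = xs ! j \<longleftrightarrow> i = j"
  unfolding is_perm_def by (simp add: nth_eq_iff_index_eq)

lemma length_skew_sum[simp]: "length (skew_sum a b) = length a + length b"
  by (simp add: skew_sum_def)

lemma is_perm_skew_sum: "is_perm a \<Longrightarrow> is_perm b \<Longrightarrow> is_perm (skew_sum a b)"
  apply (rule is_permI)
  by (auto simp: skew_sum_def is_perm_def)

lemma is_perm_Nil[simp]: "is_perm []" by (simp add: is_perm_def)

lemma is_perm_upt: "is_perm [0..<k]" by (simp add: is_perm_def)

lemma skew_sum_Nil1[simp]: "skew_sum [] a = a" by (simp add: skew_sum_def)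
lemma skew_sum_Nil2[simp]: "skew_sum a [] = a" by (simp add: skew_sum_def)
lemma skew_sum_assoc: "skew_sum (skew_sum a b) c = skew_sum a (skew_sum b c)"
  by (simp add: skew_sum_def add.assoc)

lemma contains_Nil: "contains s []"
  by (simp add: contains_def strict_mono_on_def)

lemma contains_sum:
  assumes p1: "is_perm s1" "is_perm p1" and c1: "contains s1 p1" and c2: "contains s2 p2"
  shows "contains (skew_sum s1 s2) (skew_sum p1 p2)"
proof -
  obtain l1 where l1: "strict_mono_on {0..<length p1} l1" "\<forall>i<length p1. l1 i < length s1"
    "\<forall>i<length p1. \<forall>j<length p1. p1 ! i < p1 ! j \<longleftrightarrow> s1 ! (l1 i) < s1 ! (l1 j)"
    using c1 unfolding contains_def by blast
  obtain l2 where l2: "strict_mono_on {0..<length p2} l2" "\<forall>i<length p2. l2 i < length s2"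
    "\<forall>i<length p2. \<forall>j<length p2. p2 ! i < p2 ! j \<longleftrightarrow> s2 ! (l2 i) < s2 ! (l2 j)"
    using c2 unfolding contains_def by blast
  define n1 where "n1 = length p1"
  define m1 where "m1 = length s1"
  define l where "l i = (if i < n1 then l1 i else m1 + l2 (i - n1))" for i
  have pv: "skew_sum p1 p2 ! i = (if i < n1 then p1 ! i else p2 ! (i - n1) + n1)" if "i < n1 + length p2" for i
    using that by (auto simp: skew_sum_def nth_append n1_def)
  have sv: "skew_sum s1 s2 ! l i = (if i < n1 then s1 ! l1 i else s2 ! l2 (i - n1) + m1)"
    if "i < n1 + length p2" for i
    using that l1(2) l2(2) by (auto simp: skew_sum_def nth_append l_def n1_def m1_def)
  have b1: "p1 ! i < n1" if "i < n1" for i using is_perm_bound[OF p1(2)] that n1_def by simp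
  have b2: "s1 ! l1 i < m1" if "i < n1" for i using is_perm_bound[OF p1(1)] l1(2) that n1_def m1_def by simp
  show ?thesis unfolding contains_def
  proof (intro exI[of _ l] conjI allI impI)
    show "strict_mono_on {0..<length (skew_sum p1 p2)} l"
    proof (rule strict_mono_onI)
      fix i j assume "i \<in> {0..<length (skew_sum p1 p2)}" "j \<in> {0..<length (skew_sum p1 p2)}" "i < j"
      then show "l i < l j"
      proof (cases "i < n1")
        case False
        then have "l2 (i - length p1) < l2 (j - length p1)"
          using l2(1) \<open>i < j\<close> \<open>j \<in> _\<close> by (intro strict_mono_onD[OF l2(1)]) (auto simp: n1_def)
        then show ?thesis using False \<open>i<j\<close> by (simp add: l_def n1_def)
      qed (use l1 l2 in \<open>auto simp: l_def n1_def m1_def strict_mono_on_def\<close>)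
    qed
  next
    fix i assume "i < length (skew_sum p1 p2)"
    then show "l i < length (skew_sum s1 s2)"
      using l1 l2 by (auto simp: l_def n1_def m1_def)
  next
    fix i j assume i: "i < length (skew_sum p1 p2)" and j: "j < length (skew_sum p1 p2)"
    then have i': "i < n1 + length p2" and j': "j < n1 + length p2" by (auto simp: n1_def)
    show "skew_sum p1 p2 ! i < skew_sum p1 p2 ! j \<longleftrightarrow> skew_sum s1 s2 ! l i < skew_sum s1 s2 ! l j"
      using pv[OF i'] pv[OF j'] sv[OF i'] sv[OF j']
    proof (cases "i < n1"; cases "j < n1")
      assume "i < n1" "j < n1" then show ?thesis using l1(3) n1_def pv[OF i'] pv[OF j'] sv[OF i'] sv[OF j'] by simp
    next
      assume "i < n1" "\<not> j < n1" then show ?thesis using b1[of i] b2[of i] pv[OF i'] pv[OF j'] sv[OF i'] sv[OF j'] by simp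
    next
      assume "\<not> i < n1" "j < n1" then show ?thesis using b1[of j] b2[of j] pv[OF i'] pv[OF j'] sv[OF i'] sv[OF j'] by simp
    next
      assume "\<not> i < n1" "\<not> j < n1"
      then have "i - n1 < length p2" "j - n1 < length p2" using i' j' by auto
      then show ?thesis using pv[OF i'] pv[OF j'] sv[OF i'] sv[OF j'] l2(3) \<open>\<not> i < n1\<close> \<open>\<not> j < n1\<close> by simp
    qed
  qed
qed


lemma contains_by_list:
  assumes "length ls = length p" "sorted_wrt (<) ls" "\<forall>x\<in>set ls. x < length s"
    "\<forall>i<length p. \<forall>j<length p. p!i < p!j \<longleftrightarrow> s!(ls!i) < s!(ls!j)"
  shows "contains s p"
  unfolding contains_def
proof (intro exI[of _ "\<lambda>i. ls ! i"] conjI)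
  show "strict_mono_on {0..<length p} ((!) ls)"
    using assms(1,2) by (auto intro!: strict_mono_onI sorted_wrt_nth_less)
qed (use assms in auto)

lemma pat321:
  assumes "i < j" "j < k" "k < length s" "s!i > s!j" "s!j > s!k"
  shows "contains s [2,1,0]"
  apply (rule contains_by_list[of "[i,j,k]"])
  using assms by (auto simp: numeral_eq_Suc less_Suc_eq)

lemma pat2413:
  assumes "a < b" "b < c" "c < d" "d < length s" "s!c < s!a" "s!a < s!d" "s!d < s!b"
  shows "contains s [1,3,0,2]"
  apply (rule contains_by_list[of "[a,b,c,d]"])
  using assms by (auto simp: numeral_eq_Suc less_Suc_eq)

lemma pat2143:
  assumes "a < b" "b < c" "c < d" "d < length s" "s!b < s!a" "s!a < s!d" "s!d < s!c"
  shows "contains s [1,0,3,2]"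
  apply (rule contains_by_list[of "[a,b,c,d]"])
  using assms by (auto simp: numeral_eq_Suc less_Suc_eq)

lemma riffle_inv:
  assumes r: "riffle p" and ij: "i < j" "j < length p" "p!j < p!i"
    and ij': "i' < j'" "j' < length p" "p!j' < p!i'"
  shows "p!j < p!i'"
proof (rule ccontr)
  assume "\<not> ?thesis"
  then have ge: "p!i' \<le> p!j" by simp
  have perm: "is_perm p" and a1: "\<not> contains p [2,1,0]" and a2: "\<not> contains p [1,0,3,2]"
    and a3: "\<not> contains p [1,3,0,2]" using r by (auto simp: riffle_def avoids_def)
  show False
  proof (cases "p!i' = p!j")
    case True
    then have "i' = j" using is_perm_nth_eq[OF perm] ij ij' by auto
    then show False using pat321[of j i' j' p] a1 pat321[of i j j' p] ij ij' by auto
  next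
    case False
    with ge have gt: "p!i' < p!j" by simp
    have "j \<noteq> j'" using gt ij' by auto
    show False
    proof (cases "j < j'")
      case True then show False using pat321[of i j j' p] a1 ij ij' gt by auto
    next
      case False
      with \<open>j \<noteq> j'\<close> have "j' < j" by simp
      show False
      proof (cases "i < i'")
        case True then show False using pat321[of i i' j' p] a1 ij ij' gt by auto
      next
        case False
        have "i \<noteq> i'" using gt ij by auto
        with False have "i' < i" by simp
        have "i \<noteq> j'" using gt ij ij' by auto
        show False
        proof (cases "i < j'")
          case True
          then show False using pat2413[of i' i j' j p] a3 ij ij' gt \<open>i' < i\<close> \<open>j' < j\<close> by auto
        next
          case False
          with \<open>i \<noteq> j'\<close> have "j' < i" by simp
          then show False using pat2143[of i' j' i j p] a2 ij ij' gt by auto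
        qed
      qed
    qed
  qed
qed

lemma riffle_struct:
  assumes r: "riffle p"
  shows "\<exists>k. \<forall>a b. a < b \<longrightarrow> b < length p \<longrightarrow> (p!a < k \<longleftrightarrow> p!b < k) \<longrightarrow> p!a < p!b"
proof -
  have perm: "is_perm p" using r by (simp add: riffle_def)
  define H where "H = {p!a | a. \<exists>b. a < b \<and> b < length p \<and> p!b < p!a}"
  have fin: "finite H"
  proof -
    have "H \<subseteq> (!) p ` {..<length p}" unfolding H_def by auto
    then show ?thesis using finite_subset by blast
  qed
  show ?thesis
  proof (cases "H = {}")
    case True
    show ?thesis
    proof (intro exI[of _ 0] allI impI)
      fix a b assume "a < b" "b < length p"
      then have "\<not> p!b < p!a" using True unfolding H_def by blast
      moreover have "p!a \<noteq> p!b" using is_perm_nth_eq[OF perm] \<open>a<b\<close> \<open>b < length p\<close> by auto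
      ultimately show "p!a < p!b" by simp
    qed
  next
    case False
    show ?thesis
    proof (intro exI[of _ "Min H"] allI impI)
      fix a b assume ab: "a < b" "b < length p" and side: "(p!a < Min H) = (p!b < Min H)"
      have "p!a \<noteq> p!b" using is_perm_nth_eq[OF perm] ab by auto
      moreover have "\<not> p!b < p!a"
      proof
        assume inv: "p!b < p!a"
        then have "p!a \<in> H" unfolding H_def using ab by blast
        then have "Min H \<le> p!a" using fin by simp
        moreover have "p!b < Min H"
          unfolding Min_gr_iff[OF fin False]
        proof
          fix x assume "x \<in> H"
          then obtain a' b' where "x = p!a'" "a' < b'" "b' < length p" "p!b' < p!a'"
            unfolding H_def by blast
          then show "p!b < x" using riffle_inv[OF r ab inv] by auto
        qed
        ultimately show False using side by simp
      qed
      ultimately show "p!a < p!b" by simp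
    qed
  qed
qed

lemma antiriffle_struct:
  assumes r: "antiriffle s"
  shows "\<exists>k. \<forall>a b. a < b \<longrightarrow> b < length s \<longrightarrow> (a < k \<longleftrightarrow> b < k) \<longrightarrow> s!a < s!b"
proof -
  obtain p where p: "riffle p" "length p = length s" "\<forall>i<length s. p ! (s ! i) = i"
    and ps: "is_perm s" using r unfolding antiriffle_def by blast
  obtain k where k: "\<forall>a b. a < b \<longrightarrow> b < length p \<longrightarrow> (p!a < k \<longleftrightarrow> p!b < k) \<longrightarrow> p!a < p!b"
    using riffle_struct[OF p(1)] by blast
  show ?thesis
  proof (intro exI[of _ k] allI impI)
    fix a b assume ab: "a < b" "b < length s" "(a < k) = (b < k)"
    have x: "s!a < length p" "s!b < length p" using is_perm_bound[OF ps] ab p(2) by auto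
    have ne: "s!a \<noteq> s!b" using is_perm_nth_eq[OF ps] ab by auto
    have "\<not> s!b < s!a"
    proof
      assume "s!b < s!a"
      moreover have pa: "p!(s!a) = a" and pb: "p!(s!b) = b" using p(3) ab by auto
      ultimately have "p!(s!b) < p!(s!a)" using k x ab(3) by metis
      then show False using pa pb ab by auto
    qed
    then show "s!a < s!b" using ne by simp
  qed
qed


definition R :: "nat \<Rightarrow> nat list" where
  "R s = map (\<lambda>q. if even q then q div 2 else s + q div 2) [0..<2*s]"
definition A :: "nat \<Rightarrow> nat list" where
  "A s = map (\<lambda>q. if q < s then 2*q else 2*(q-s)+1) [0..<2*s]"
definition B :: "nat \<Rightarrow> nat list" where
  "B s = skew_sum (R s) (A s)"

lemma length_R[simp]: "length (R s) = 2*s" by (simp add: R_def)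
lemma length_A[simp]: "length (A s) = 2*s" by (simp add: A_def)
lemma length_B[simp]: "length (B s) = 4*s" by (simp add: B_def)

lemma is_perm_R: "is_perm (R s)"
proof (rule is_permI)
  show "set (R s) = {0..<length (R s)}"
  proof
    show "set (R s) \<subseteq> {0..<length (R s)}" by (auto simp: R_def)
  next
    show "{0..<length (R s)} \<subseteq> set (R s)"
    proof
      fix x assume "x \<in> {0..<length (R s)}"
      then have x: "x < 2*s" by simp
      show "x \<in> set (R s)"
      proof (cases "x < s")
        case True
        then have "R s ! (2*x) = x" "2*x < length (R s)" by (simp_all add: R_def)
        then show ?thesis by (metis nth_mem)
      next
        case False
        define q where "q = 2*(x-s)+1"
        have "q < 2*s" using False x by (simp add: q_def)
        then have "R s ! q = x" "q < length (R s)" using False by (simp_all add: R_def q_def)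
        then show ?thesis by (metis nth_mem)
      qed
    qed
  qed
qed

lemma is_perm_A: "is_perm (A s)"
proof (rule is_permI)
  show "set (A s) = {0..<length (A s)}"
  proof
    show "set (A s) \<subseteq> {0..<length (A s)}" by (auto simp: A_def)
  next
    show "{0..<length (A s)} \<subseteq> set (A s)"
    proof
      fix x assume "x \<in> {0..<length (A s)}"
      then have x: "x < 2*s" by simp
      show "x \<in> set (A s)"
      proof (cases "even x")
        case True
        define q where "q = x div 2"
        have "q < 2*s" using x by (simp add: q_def)
        then have "A s ! q = x" "q < length (A s)" using True x by (auto simp: A_def q_def)
        then show ?thesis by (metis nth_mem)
      next
        case False
        define q where "q = s + x div 2"
        have "q < 2*s" using x by (simp add: q_def)
        then have "A s ! q = x" "q < length (A s)" using False x by (auto simp: A_def q_def)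
        then show ?thesis by (metis nth_mem)
      qed
    qed
  qed
qed

lemma is_perm_B: "is_perm (B s)"
  by (simp add: B_def is_perm_skew_sum is_perm_R is_perm_A)

lemma riffle_embed:
  assumes perm: "is_perm p" and len: "length p \<le> s" and r: "riffle p"
  shows "contains (R s) p"
proof -
  obtain k where k: "\<forall>a b. a < b \<longrightarrow> b < length p \<longrightarrow> (p!a < k \<longleftrightarrow> p!b < k) \<longrightarrow> p!a < p!b"
    using riffle_struct[OF r] by blast
  define l where "l q = (if p!q < k then 2*q else 2*q+1)" for q
  have lv: "R s ! l q = (if p!q < k then q else s + q)" if "q < length p" for q
    using that len by (auto simp: R_def l_def nth_append)
  show ?thesis unfolding contains_def
  proof (intro exI[of _ l] conjI allI impI)
    show "strict_mono_on {0..<length p} l"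
      by (rule strict_mono_onI) (auto simp: l_def)
  next
    fix i assume "i < length p" then show "l i < length (R s)" using len by (auto simp: l_def)
  next
    fix i j assume i: "i < length p" and j: "j < length p"
    have ne: "i \<noteq> j \<Longrightarrow> p!i \<noteq> p!j" using is_perm_nth_eq[OF perm i j] by simp
    have m1: "i < j \<Longrightarrow> (p!i < k) = (p!j < k) \<Longrightarrow> p!i < p!j" using k j by blast
    have m2: "j < i \<Longrightarrow> (p!i < k) = (p!j < k) \<Longrightarrow> p!j < p!i" using k i by blast
    show "(p!i < p!j) = (R s ! l i < R s ! l j)"
      unfolding lv[OF i] lv[OF j] using i j len ne m1 m2
      by (cases "i < j"; cases "j < i"; cases "p!i < k"; cases "p!j < k"; auto)
  qed
qed

lemma anti_embed:
  assumes perm: "is_perm p" and len: "length p \<le> s" and r: "antiriffle p"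
  shows "contains (A s) p"
proof -
  obtain k where k: "\<forall>a b. a < b \<longrightarrow> b < length p \<longrightarrow> (a < k \<longleftrightarrow> b < k) \<longrightarrow> p!a < p!b"
    using antiriffle_struct[OF r] by blast
  have bnd: "p!q < s" if "q < length p" for q using is_perm_bound[OF perm that] len by simp
  define l where "l q = (if q < k then p!q else s + p!q)" for q
  have lv: "A s ! l q = (if q < k then 2*(p!q) else 2*(p!q)+1)" if "q < length p" for q
    using bnd[OF that] by (auto simp: A_def l_def)
  show ?thesis unfolding contains_def
  proof (intro exI[of _ l] conjI allI impI)
    show "strict_mono_on {0..<length p} l"
    proof (rule strict_mono_onI)
      fix a b assume "a \<in> {0..<length p}" "b \<in> {0..<length p}" "a < b"
      then show "l a < l b" using k bnd[of a] bnd[of b]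
        by (cases "a < k"; cases "b < k"; auto simp: l_def)
    qed
  next
    fix i assume "i < length p" then show "l i < length (A s)" using bnd[of i] by (auto simp: l_def)
  next
    fix i j assume i: "i < length p" and j: "j < length p"
    have ne: "i \<noteq> j \<Longrightarrow> p!i \<noteq> p!j" using is_perm_nth_eq[OF perm i j] by simp
    show "(p!i < p!j) = (A s ! l i < A s ! l j)"
      unfolding lv[OF i] lv[OF j] using ne
      by (cases "i = j"; cases "i < k"; cases "j < k"; auto)
  qed
qed

definition atom :: "nat list \<Rightarrow> bool" where
  "atom a \<longleftrightarrow> riffle a \<or> antiriffle a"

lemma atom_perm: "atom a \<Longrightarrow> is_perm a"
  by (auto simp: atom_def riffle_def antiriffle_def)

lemma atom_embed: "atom a \<Longrightarrow> length a \<le> s \<Longrightarrow> contains (B s) a"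
proof -
  assume a: "atom a" and len: "length a \<le> s"
  show ?thesis
  proof (cases "riffle a")
    case True
    then have "contains (R s) a" using riffle_embed atom_perm[OF a] len by blast
    then have "contains (skew_sum (R s) (A s)) (skew_sum a [])"
      using contains_sum[OF is_perm_R atom_perm[OF a]] contains_Nil by blast
    then show ?thesis by (simp add: B_def)
  next
    case False
    then have "antiriffle a" using a by (simp add: atom_def)
    then have "contains (A s) a" using anti_embed atom_perm[OF a] len by blast
    then have "contains (skew_sum (R s) (A s)) (skew_sum [] a)"
      using contains_sum[OF is_perm_R is_perm_Nil] contains_Nil by blast
    then show ?thesis by (simp add: B_def)
  qed
qed

fun sumlist :: "nat list list \<Rightarrow> nat list" where
  "sumlist [] = []"
| "sumlist (a # as) = skew_sum a (sumlist as)"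

lemma sumlist_append: "sumlist (xs @ ys) = skew_sum (sumlist xs) (sumlist ys)"
  by (induction xs) (auto simp: skew_sum_assoc)

lemma length_sumlist: "length (sumlist xs) = sum_list (map length xs)"
  by (induction xs) auto

lemma sumlist_perm: "\<forall>a\<in>set xs. atom a \<Longrightarrow> is_perm (sumlist xs)"
  by (induction xs) (auto intro: is_perm_skew_sum atom_perm)

lemma skew_riffle_atoms: "skew_riffle p \<Longrightarrow> \<exists>xs. p = sumlist xs \<and> (\<forall>a\<in>set xs. atom a)"
proof (induction rule: skew_riffle.induct)
  case (riffle_sr s) then show ?case by (intro exI[of _ "[s]"]) (auto simp: atom_def)
next
  case (antiriffle_sr s) then show ?case by (intro exI[of _ "[s]"]) (auto simp: atom_def)
next
  case (sum_sr s t)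
  then obtain xs ys where "s = sumlist xs" "\<forall>a\<in>set xs. atom a" "t = sumlist ys" "\<forall>a\<in>set ys. atom a" by blast
  then show ?case by (intro exI[of _ "xs @ ys"]) (auto simp: sumlist_append)
qed

lemma split_atoms:
  "sum_list (map length xs) \<le> p + q + 1 \<Longrightarrow> sum_list (map length xs) \<le> p \<or>
    (\<exists>ys a zs. xs = ys @ a # zs \<and> sum_list (map length ys) \<le> p \<and> sum_list (map length zs) \<le> q)"
proof (induction xs arbitrary: p)
  case Nil then show ?case by simp
next
  case (Cons b rest)
  show ?case
  proof (cases "length b > p")
    case True
    then show ?thesis using Cons.prems by (intro disjI2 exI[of _ "[]"] exI[of _ b] exI[of _ rest]) auto
  next
    case False
    then have "sum_list (map length rest) \<le> (p - length b) + q + 1" using Cons.prems by simp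
    from Cons.IH[OF this] show ?thesis
    proof
      assume "sum_list (map length rest) \<le> p - length b"
      then show ?thesis using False by (intro disjI1) simp
    next
      assume "\<exists>ys a zs. rest = ys @ a # zs \<and> sum_list (map length ys) \<le> p - length b \<and> sum_list (map length zs) \<le> q"
      then obtain ys a zs where "rest = ys @ a # zs" "sum_list (map length ys) \<le> p - length b" "sum_list (map length zs) \<le> q" by blast
      then show ?thesis using False by (intro disjI2 exI[of _ "b # ys"] exI[of _ a] exI[of _ zs]) auto
    qed
  qed
qed

function U :: "nat \<Rightarrow> nat list" where
  "U n = (if n = 0 then [] else skew_sum (skew_sum (U (n div 2)) (B n)) (U (n div 2)))"
  by auto
termination by (relation "measure id") auto

declare U.simps[simp del]

lemma is_perm_U: "is_perm (U n)"
proof (induction n rule: less_induct)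
  case (less n)
  show ?case
  proof (cases "n = 0")
    case True then show ?thesis by (simp add: U.simps)
  next
    case False
    then show ?thesis using less[of "n div 2"] by (simp add: U.simps is_perm_skew_sum is_perm_B)
  qed
qed

lemma length_U: "length (U n) = (if n = 0 then 0 else 2 * length (U (n div 2)) + 4 * n)"
  by (simp add: U.simps)

lemma U_universal:
  "\<forall>a\<in>set xs. atom a \<Longrightarrow> sum_list (map length xs) \<le> n \<Longrightarrow> contains (U n) (sumlist xs)"
proof (induction n arbitrary: xs rule: less_induct)
  case (less n)
  show ?case
  proof (cases "sumlist xs = []")
    case True then show ?thesis by (simp add: contains_Nil)
  next
    case False
    then have "length (sumlist xs) > 0" by simp
    then have "n > 0" using less.prems length_sumlist[of xs] by linarith
    define h where "h = n div 2"
    have hn: "h < n" using \<open>n > 0\<close> by (simp add: h_def)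
    have U: "U n = skew_sum (skew_sum (U h) (B n)) (U h)" using \<open>n>0\<close> by (simp add: U.simps h_def)
    have "sum_list (map length xs) \<le> h + h + 1" using less.prems(2) by (simp add: h_def)
    from split_atoms[OF this] show ?thesis
    proof
      assume "sum_list (map length xs) \<le> h"
      then have c: "contains (U h) (sumlist xs)" using less.IH[OF hn less.prems(1)] by blast
      have "contains (skew_sum (U h) (B n)) (skew_sum (sumlist xs) [])"
        using contains_sum[OF is_perm_U sumlist_perm[OF less.prems(1)] c contains_Nil] .
      then have "contains (skew_sum (skew_sum (U h) (B n)) (U h)) (skew_sum (sumlist xs) [])"
        using contains_sum[OF is_perm_skew_sum[OF is_perm_U is_perm_B] sumlist_perm[OF less.prems(1)] _ contains_Nil]
        by simp
      then show ?thesis by (simp add: U)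
    next
      assume "\<exists>ys a zs. xs = ys @ a # zs \<and> sum_list (map length ys) \<le> h \<and> sum_list (map length zs) \<le> h"
      then obtain ys a zs where xs: "xs = ys @ a # zs" and ys: "sum_list (map length ys) \<le> h"
        and zs: "sum_list (map length zs) \<le> h" by blast
      have aty: "\<forall>a\<in>set ys. atom a" and atz: "\<forall>a\<in>set zs. atom a" and ata: "atom a"
        using less.prems(1) xs by auto
      have la: "length a \<le> n" using less.prems(2) xs by simp
      have c1: "contains (U h) (sumlist ys)" using less.IH[OF hn aty ys] .
      have c2: "contains (B n) a" using atom_embed[OF ata la] .
      have c3: "contains (U h) (sumlist zs)" using less.IH[OF hn atz zs] .
      have "contains (skew_sum (U h) (B n)) (skew_sum (sumlist ys) a)"
        using contains_sum[OF is_perm_U sumlist_perm[OF aty] c1 c2] .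
      then have "contains (skew_sum (skew_sum (U h) (B n)) (U h)) (skew_sum (skew_sum (sumlist ys) a) (sumlist zs))"
        using contains_sum[OF is_perm_skew_sum[OF is_perm_U is_perm_B]
            is_perm_skew_sum[OF sumlist_perm[OF aty] atom_perm[OF ata]] _ c3] by blast
      moreover have "sumlist xs = skew_sum (skew_sum (sumlist ys) a) (sumlist zs)"
        by (simp add: xs sumlist_append skew_sum_assoc)
      ultimately show ?thesis by (simp add: U)
    qed
  qed
qed


lemma length_U_bound: "n \<ge> 1 \<Longrightarrow> real (length (U n)) \<le> 4 * real n * (log 2 (real n) + 1)"
proof (induction n rule: less_induct)
  case (less n)
  show ?case
  proof (cases "n = 1")
    case True then show ?thesis by (simp add: length_U[of 1] U.simps)
  next
    case False
    define h where "h = n div 2"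
    have h1: "h \<ge> 1" "h < n" "2*h \<le> n" using False less.prems by (auto simp: h_def)
    have IH: "real (length (U h)) \<le> 4 * real h * (log 2 (real h) + 1)" using less.IH h1 by auto
    have len: "length (U n) = 2 * length (U h) + 4 * n" using less.prems length_U[of n] by (simp add: h_def)
    have lg: "log 2 (real h) + 1 = log 2 (2 * real h)" using h1 by (simp add: log_mult)
    have "log 2 (2 * real h) \<le> log 2 (real n)" using h1 by (subst log_le_cancel_iff) auto
    moreover have "0 \<le> log 2 (2 * real h)" using h1 by simp
    ultimately have "4 * (2 * real h) * log 2 (2 * real h) \<le> 4 * real n * log 2 (real n)"
      using h1 by (intro mult_mono) auto
    moreover have "real (length (U h)) \<le> 4 * real h * log 2 (2 * real h)" using IH by (simp only: lg)
    moreover have "real (length (U n)) = 2 * real (length (U h)) + 4 * real n" using len by simp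
    ultimately show ?thesis by (simp add: algebra_simps)
  qed
qed

theorem theorem13:
  shows "\<exists>L :: nat \<Rightarrow> nat.
    (\<lambda>n. real (L n) - 16 * real n * log 2 (real n)) \<in> \<Theta>(\<lambda>n. real n) \<and>
    (\<forall>n>0. \<exists>\<sigma>. is_perm \<sigma> \<and> length \<sigma> = L n \<and>
        (\<forall>\<pi>. length \<pi> = n \<and> skew_riffle \<pi> \<longrightarrow> contains \<sigma> \<pi>))"
proof (intro exI[of _ "\<lambda>n. nat \<lceil>16 * real n * log 2 (real n)\<rceil> + 4 * n"] conjI allI impI)
  define L where "L n = nat \<lceil>16 * real n * log 2 (real n)\<rceil> + 4 * n" for n :: nat
  have Lr: "real (L n) = of_int \<lceil>16 * real n * log 2 (real n)\<rceil> + 4 * real n" if "n \<ge> 1" for n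
  proof -
    have "0 \<le> 16 * real n * log 2 (real n)" using that by simp
    then have "0 \<le> \<lceil>16 * real n * log 2 (real n)\<rceil>" by linarith
    then show ?thesis by (simp add: L_def)
  qed
  show "(\<lambda>n. real (nat \<lceil>16 * real n * log 2 (real n)\<rceil> + 4 * n) - 16 * real n * log 2 (real n)) \<in> \<Theta>(\<lambda>n. real n)"
  proof (rule bigthetaI'[of 1 5])
    show "\<forall>\<^sub>F n in at_top. 1 * norm (real n) \<le> norm (real (nat \<lceil>16 * real n * log 2 (real n)\<rceil> + 4 * n) - 16 * real n * log 2 (real n))
       \<and> norm (real (nat \<lceil>16 * real n * log 2 (real n)\<rceil> + 4 * n) - 16 * real n * log 2 (real n)) \<le> 5 * norm (real n)"
      using eventually_ge_at_top[of "1::nat"]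
    proof eventually_elim
      case (elim n)
      have e: "real (nat \<lceil>16 * real n * log 2 (real n)\<rceil> + 4 * n) = of_int \<lceil>16 * real n * log 2 (real n)\<rceil> + 4 * real n"
        using Lr[OF elim] by (simp add: L_def)
      have c1: "16 * real n * log 2 (real n) \<le> of_int \<lceil>16 * real n * log 2 (real n)\<rceil>" by (rule le_of_int_ceiling)
      have c2: "of_int \<lceil>16 * real n * log 2 (real n)\<rceil> \<le> 16 * real n * log 2 (real n) + 1" by (rule of_int_ceiling_le_add_one)
      have "real n \<ge> 1" using elim by simp
      then have aux: "\<And>c::real. 0 \<le> c \<Longrightarrow> c \<le> 1 \<Longrightarrow> real n \<le> \<bar>c + 4*real n\<bar> \<and> \<bar>c + 4*real n\<bar> \<le> 5 * real n"
        by auto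
      have eq: "real (nat \<lceil>16 * real n * log 2 (real n)\<rceil> + 4 * n) - 16 * real n * log 2 (real n)
          = (of_int \<lceil>16 * real n * log 2 (real n)\<rceil> - 16 * real n * log 2 (real n)) + 4 * real n"
        unfolding e by simp
      have "real n \<le> \<bar>(of_int \<lceil>16 * real n * log 2 (real n)\<rceil> - 16 * real n * log 2 (real n)) + 4*real n\<bar>
        \<and> \<bar>(of_int \<lceil>16 * real n * log 2 (real n)\<rceil> - 16 * real n * log 2 (real n)) + 4*real n\<bar> \<le> 5 * real n"
        by (rule aux) (use c1 c2 in linarith)+
      then show ?case unfolding eq real_norm_def by simp
    qed
  qed simp_all
next
  fix n :: nat assume "n > 0"
  define L where "L = nat \<lceil>16 * real n * log 2 (real n)\<rceil> + 4 * n"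
  have "real (length (U n)) \<le> 4 * real n * (log 2 (real n) + 1)" using length_U_bound \<open>n>0\<close> by simp
  moreover have "0 \<le> log 2 (real n)" using \<open>n>0\<close> by simp
  ultimately have "real (length (U n)) \<le> 16 * real n * log 2 (real n) + 4 * real n"
    by (simp add: algebra_simps) (smt (verit) mult_left_mono of_nat_0_le_iff)
  also have "\<dots> \<le> real L"
  proof -
    have "0 \<le> 16 * real n * log 2 (real n)" using \<open>0 \<le> log 2 (real n)\<close> by simp
    then show ?thesis unfolding L_def by linarith
  qed
  finally have le: "length (U n) \<le> L" by linarith
  define \<sigma> where "\<sigma> = skew_sum (U n) [0..<L - length (U n)]"
  show "\<exists>\<sigma>. is_perm \<sigma> \<and> length \<sigma> = nat \<lceil>16 * real n * log 2 (real n)\<rceil> + 4 * n \<and>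
        (\<forall>\<pi>. length \<pi> = n \<and> skew_riffle \<pi> \<longrightarrow> contains \<sigma> \<pi>)"
  proof (intro exI[of _ \<sigma>] conjI allI impI)
    show "is_perm \<sigma>" by (simp add: \<sigma>_def is_perm_skew_sum is_perm_U is_perm_upt)
    show "length \<sigma> = nat \<lceil>16 * real n * log 2 (real n)\<rceil> + 4 * n" using le by (simp add: \<sigma>_def L_def)
  next
    fix \<pi> assume "length \<pi> = n \<and> skew_riffle \<pi>"
    then obtain xs where xs: "\<pi> = sumlist xs" "\<forall>a\<in>set xs. atom a" "length \<pi> = n"
      using skew_riffle_atoms by blast
    have "contains (U n) \<pi>" using U_universal[OF xs(2)] xs length_sumlist by simp
    then have "contains \<sigma> (skew_sum \<pi> [])" unfolding \<sigma>_def
      using contains_sum[OF is_perm_U sumlist_perm[OF xs(2)]] contains_Nil xs(1) by blast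
    then show "contains \<sigma> \<pi>" by simp
  qed
qed

end
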